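(* The Top-$t$ Truncated Harmonic rule has metric distortion $O(m/t)$ (indeed at most $21m/t$).
   Context: Setting: $n$ agents, $m$ alternatives, $1\le t\le m$; each agent has an underlying strict ranking but only her ordered top-$t$ list is reported (top-$t$ profile $\vec\sigma_t$); $r_i(Y)\in\{1,\dots,t\}$ is the reported rank of $Y$ when $Y$ is among $i$'s top $t$; $H_t=\sum_{k=1}^t1/k$. For the reported information, $Y\succ_i\hat X$ holds when $Y$ is among $i$'s top $t$ and either $\hat X$ is not among them or $r_i(Y)<r_i(\hat X)$. Metric framework: a pseudometric $d$ on agents and alternatives is consistent with $\vec\sigma_t$ if for some full ranking profile whose top-$t$ prefixes agree with $\vec\sigma_t$, $X\succ_iY\Rightarrow d(i,X)\le d(i,Y)$. $\mathrm{SC}(X,d)=\sum_id(i,X)$; metric distortion of $f$: $\sup_{\vec\sigma_t}\sup_d\mathbb E_{X\sim f(\vec\sigma_t)}[\mathrm{SC}(X,d)]/\min_X\mathrm{SC}(X,d)$. Top-$t$ Truncated Harmonic rule: fix a deterministic voting rule $g$ on top-$t$ profiles with metric distortion at most $6m/t+1$ (such a rule exists), and let $\hat X=g(\vec\sigma_t)$. Pick an agent $i$ uniformly at random and output $Y$ with probability $p(i,Y)=\frac{1}{2H_t r_i(Y)}$ if $Y\succ_i\hat X$, $p(i,\hat X)=1-\sum_{Y\succ_i\hat X}p(i,Y)$, and $p(i,Y)=0$ otherwise. *)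

theory Defs
  imports Complex_Main
begin

text \<open>A (top-t or full) ranking is a list of distinct alternatives, best first.
  Profiles are functions from agents to rankings (only values on N matter).\<close>

definition top_t_profile :: "'v set \<Rightarrow> 'a set \<Rightarrow> nat \<Rightarrow> ('v \<Rightarrow> 'a list) \<Rightarrow> bool" where
  "top_t_profile N A t \<sigma> \<longleftrightarrow>
     (\<forall>i\<in>N. distinct (\<sigma> i) \<and> length (\<sigma> i) = t \<and> set (\<sigma> i) \<subseteq> A)"

definition full_profile :: "'v set \<Rightarrow> 'a set \<Rightarrow> ('v \<Rightarrow> 'a list) \<Rightarrow> bool" where
  "full_profile N A \<pi> \<longleftrightarrow> (\<forall>i\<in>N. distinct (\<pi> i) \<and> set (\<pi> i) = A)"

text \<open>0-based position of y in a (distinct) list; the reported rank is pos + 1.\<close>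
definition pos :: "'a list \<Rightarrow> 'a \<Rightarrow> nat" where
  "pos xs y = (THE k. k < length xs \<and> xs ! k = y)"

definition rnk :: "('v \<Rightarrow> 'a list) \<Rightarrow> 'v \<Rightarrow> 'a \<Rightarrow> nat" where
  "rnk \<sigma> i Y = pos (\<sigma> i) Y + 1"

definition rep_pref :: "('v \<Rightarrow> 'a list) \<Rightarrow> 'v \<Rightarrow> 'a \<Rightarrow> 'a \<Rightarrow> bool" where
  "rep_pref \<sigma> i Y X \<longleftrightarrow> Y \<in> set (\<sigma> i) \<and> (X \<notin> set (\<sigma> i) \<or> rnk \<sigma> i Y < rnk \<sigma> i X)"

text \<open>Pseudometric on agents (Inl) and alternatives (Inr), axioms required on N \<union> A.\<close>
definition pseudometric_on :: "('v + 'a) set \<Rightarrow> (('v + 'a) \<Rightarrow> ('v + 'a) \<Rightarrow> real) \<Rightarrow> bool" where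
  "pseudometric_on S d \<longleftrightarrow>
     (\<forall>x\<in>S. d x x = 0) \<and>
     (\<forall>x\<in>S. \<forall>y\<in>S. d x y \<ge> 0 \<and> d x y = d y x) \<and>
     (\<forall>x\<in>S. \<forall>y\<in>S. \<forall>z\<in>S. d x z \<le> d x y + d y z)"

definition consistent :: "'v set \<Rightarrow> 'a set \<Rightarrow> nat \<Rightarrow> ('v \<Rightarrow> 'a list)
                          \<Rightarrow> (('v + 'a) \<Rightarrow> ('v + 'a) \<Rightarrow> real) \<Rightarrow> bool" where
  "consistent N A t \<sigma> d \<longleftrightarrow>
     pseudometric_on (Inl ` N \<union> Inr ` A) d \<and>
     (\<exists>\<pi>. full_profile N A \<pi> \<and> (\<forall>i\<in>N. take t (\<pi> i) = \<sigma> i) \<and>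
          (\<forall>i\<in>N. \<forall>k l. k < l \<and> l < length (\<pi> i) \<longrightarrow>
               d (Inl i) (Inr (\<pi> i ! k)) \<le> d (Inl i) (Inr (\<pi> i ! l))))"

definition SC :: "'v set \<Rightarrow> (('v + 'a) \<Rightarrow> ('v + 'a) \<Rightarrow> real) \<Rightarrow> 'a \<Rightarrow> real" where
  "SC N d X = (\<Sum>i\<in>N. d (Inl i) (Inr X))"

definition H :: "nat \<Rightarrow> real" where
  "H t = (\<Sum>k=1..t. 1 / real k)"

text \<open>Probability p(i,Y) of the Top-t Truncated Harmonic rule, given Xhat = g(sigma).\<close>
definition p_TH :: "'a set \<Rightarrow> nat \<Rightarrow> ('v \<Rightarrow> 'a list) \<Rightarrow> 'a \<Rightarrow> 'v \<Rightarrow> 'a \<Rightarrow> real" where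
  "p_TH A t \<sigma> Xh i Y =
     (if rep_pref \<sigma> i Y Xh then 1 / (2 * H t * real (rnk \<sigma> i Y))
      else if Y = Xh then
        1 - (\<Sum>Z\<in>{Z\<in>A. rep_pref \<sigma> i Z Xh}. 1 / (2 * H t * real (rnk \<sigma> i Z)))
      else 0)"

text \<open>Expected social cost of the rule's output: agent i uniform on N, then Y \<sim> p(i,\<cdot>).\<close>
definition exp_SC_TH :: "'v set \<Rightarrow> 'a set \<Rightarrow> nat \<Rightarrow> (('v \<Rightarrow> 'a list) \<Rightarrow> 'a)
                         \<Rightarrow> ('v \<Rightarrow> 'a list) \<Rightarrow> (('v + 'a) \<Rightarrow> ('v + 'a) \<Rightarrow> real) \<Rightarrow> real" where
  "exp_SC_TH N A t g \<sigma> d =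
     (\<Sum>i\<in>N. (1 / real (card N)) * (\<Sum>Y\<in>A. p_TH A t \<sigma> (g \<sigma>) i Y * SC N d Y))"

definition det_distortion_le :: "'v set \<Rightarrow> 'a set \<Rightarrow> nat \<Rightarrow> (('v \<Rightarrow> 'a list) \<Rightarrow> 'a) \<Rightarrow> real \<Rightarrow> bool" where
  "det_distortion_le N A t g D \<longleftrightarrow>
     (\<forall>\<sigma>. top_t_profile N A t \<sigma> \<longrightarrow> g \<sigma> \<in> A \<and>
        (\<forall>d. consistent N A t \<sigma> d \<longrightarrow> (\<forall>X\<in>A. SC N d (g \<sigma>) \<le> D * SC N d X)))"

end

theory Submission
  imports Defs
begin

lemma pos_prop:
  assumes "distinct xs" "y \<in> set xs"
  shows "pos xs y < length xs \<and> xs ! pos xs y = y"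
  unfolding pos_def by (rule theI') (rule distinct_Ex1[OF assms])

lemma H_pos: "1 \<le> t \<Longrightarrow> 0 < H t"
  unfolding H_def by (rule sum_pos) auto

lemma harm_bound:
  assumes dist: "distinct (\<sigma> i)" and len: "length (\<sigma> i) = t" and t1: "1 \<le> t"
    and fin: "finite S" and sub: "S \<subseteq> set (\<sigma> i)"
  shows "(\<Sum>Z\<in>S. 1 / (2 * H t * real (rnk \<sigma> i Z))) \<le> 1/2"
proof -
  have Hp: "0 < H t" using H_pos[OF t1] .
  let ?f = "\<lambda>k::nat. 1 / (2 * H t * real k)"
  have inj: "inj_on (rnk \<sigma> i) S"
  proof (rule inj_onI)
    fix a b assume a: "a \<in> S" and b: "b \<in> S" and e: "rnk \<sigma> i a = rnk \<sigma> i b"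
    hence "pos (\<sigma> i) a = pos (\<sigma> i) b" unfolding rnk_def by simp
    thus "a = b" using pos_prop[OF dist, of a] pos_prop[OF dist, of b] a b sub by auto
  qed
  have img: "rnk \<sigma> i ` S \<subseteq> {1..t}"
    using pos_prop[OF dist] sub len unfolding rnk_def by fastforce
  have "(\<Sum>Z\<in>S. ?f (rnk \<sigma> i Z)) = (\<Sum>k\<in>rnk \<sigma> i ` S. ?f k)"
    using sum.reindex[OF inj, of ?f] by simp
  also have "\<dots> \<le> (\<Sum>k\<in>{1..t}. ?f k)"
    by (rule sum_mono2) (use img Hp in auto)
  also have "\<dots> = (\<Sum>k\<in>{1..t}. (1 / (2 * H t)) * (1 / real k))"
    by (rule sum.cong) auto
  also have "\<dots> = (1 / (2 * H t)) * H t"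
    unfolding H_def by (simp add: sum_distrib_left)
  also have "\<dots> = 1/2" using Hp by simp
  finally show ?thesis .
qed

theorem mainTheorem12:
  fixes N :: "'v set" and A :: "'a set" and t m :: nat
    and g :: "('v \<Rightarrow> 'a list) \<Rightarrow> 'a"
    and \<sigma> :: "'v \<Rightarrow> 'a list" and d :: "('v + 'a) \<Rightarrow> ('v + 'a) \<Rightarrow> real"
  assumes "finite N" and "N \<noteq> {}" and "finite A" and "card A = m"
    and "1 \<le> t" and "t \<le> m"
    and "det_distortion_le N A t g (6 * real m / real t + 1)"
    and "top_t_profile N A t \<sigma>"
    and "consistent N A t \<sigma> d"
    and "X \<in> A"
  shows "exp_SC_TH N A t g \<sigma> d \<le> (21 * real m / real t) * SC N d X"
proof -
  define Xh where "Xh = g \<sigma>"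
  define n where "n = card N"
  have XhA: "Xh \<in> A" and SCXh: "SC N d Xh \<le> (6 * real m / real t + 1) * SC N d X"
    using assms(7,8,9,10) unfolding det_distortion_le_def Xh_def by auto
  have pm: "pseudometric_on (Inl ` N \<union> Inr ` A) d" using assms(9) consistent_def by blast
  obtain \<pi> where full: "full_profile N A \<pi>" and tk: "\<forall>i\<in>N. take t (\<pi> i) = \<sigma> i"
    and mono: "\<forall>i\<in>N. \<forall>k l. k < l \<and> l < length (\<pi> i) \<longrightarrow>
               d (Inl i) (Inr (\<pi> i ! k)) \<le> d (Inl i) (Inr (\<pi> i ! l))"
    using assms(9) unfolding consistent_def by blast
  have top: "\<And>i. i \<in> N \<Longrightarrow> distinct (\<sigma> i) \<and> length (\<sigma> i) = t \<and> set (\<sigma> i) \<subseteq> A"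
    using assms(8) unfolding top_t_profile_def by blast
  have dpref: "d (Inl i) (Inr Y) \<le> d (Inl i) (Inr Xh)"
    if i: "i \<in> N" and rp: "rep_pref \<sigma> i Y Xh" for i Y
  proof -
    have ds: "distinct (\<sigma> i)" and ls: "length (\<sigma> i) = t" using top[OF i] by auto
    have dpi: "distinct (\<pi> i)" and spi: "set (\<pi> i) = A" using full i unfolding full_profile_def by auto
    have tki: "take t (\<pi> i) = \<sigma> i" using tk i by auto
    have lpi: "t \<le> length (\<pi> i)" using ls tki by (metis length_take min.bounded_iff order_refl)
    have Ys: "Y \<in> set (\<sigma> i)" using rp unfolding rep_pref_def by auto
    define k where "k = pos (\<sigma> i) Y"
    have kt: "k < t" and kY: "\<sigma> i ! k = Y" using pos_prop[OF ds Ys] ls k_def by auto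
    have pk: "\<pi> i ! k = Y" using kt kY tki by (metis nth_take)
    obtain l where kl: "k < l" and ll: "l < length (\<pi> i)" and pl: "\<pi> i ! l = Xh"
    proof (cases "Xh \<in> set (\<sigma> i)")
      case True
      define l where "l = pos (\<sigma> i) Xh"
      have lt: "l < t" and lX: "\<sigma> i ! l = Xh" using pos_prop[OF ds True] ls l_def by auto
      have "k < l" using rp True unfolding rep_pref_def rnk_def k_def l_def by auto
      moreover have "\<pi> i ! l = Xh" using lt lX tki by (metis nth_take)
      ultimately show ?thesis using that lt lpi by auto
    next
      case False
      obtain l where ll: "l < length (\<pi> i)" and pl: "\<pi> i ! l = Xh"
        using XhA spi by (metis in_set_conv_nth)
      have "\<not> l < t"
      proof
        assume "l < t"
        hence "take t (\<pi> i) ! l = Xh" using pl by simp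
        moreover have "l < length (take t (\<pi> i))" using \<open>l < t\<close> ll by simp
        ultimately have "Xh \<in> set (take t (\<pi> i))" by (metis nth_mem)
        thus False using False tki by simp
      qed
      hence "k < l" using kt by simp
      thus ?thesis using that ll pl by blast
    qed
    thus ?thesis using mono i kl ll pk pl by metis
  qed
  have SCtri: "SC N d Y \<le> SC N d X + real n * (d (Inl i) (Inr X) + d (Inl i) (Inr Y))"
    if i: "i \<in> N" and Y: "Y \<in> A" for i Y
  proof -
    have pt: "d (Inl j) (Inr Y) \<le> d (Inl j) (Inr X) + (d (Inl i) (Inr X) + d (Inl i) (Inr Y))"
      if j: "j \<in> N" for j
    proof -
      have m1: "Inl j \<in> Inl ` N \<union> Inr ` A" "Inl i \<in> Inl ` N \<union> Inr ` A"
        "Inr X \<in> Inl ` N \<union> Inr ` A" "Inr Y \<in> Inl ` N \<union> Inr ` A" using i j Y assms(10) by auto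
      have t1: "d (Inl j) (Inr Y) \<le> d (Inl j) (Inr X) + d (Inr X) (Inr Y)"
        using pm m1 unfolding pseudometric_on_def by blast
      have t2: "d (Inr X) (Inr Y) \<le> d (Inr X) (Inl i) + d (Inl i) (Inr Y)"
        using pm m1 unfolding pseudometric_on_def by blast
      have s: "d (Inr X) (Inl i) = d (Inl i) (Inr X)"
        using pm m1 unfolding pseudometric_on_def by metis
      show ?thesis using t1 t2 s by linarith
    qed
    have "SC N d Y \<le> (\<Sum>j\<in>N. d (Inl j) (Inr X) + (d (Inl i) (Inr X) + d (Inl i) (Inr Y)))"
      unfolding SC_def by (rule sum_mono) (rule pt)
    also have "\<dots> = SC N d X + real n * (d (Inl i) (Inr X) + d (Inl i) (Inr Y))"
      unfolding SC_def n_def by (simp add: sum.distrib)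
    finally show ?thesis .
  qed
  define B where "B i = SC N d X + real n * (d (Inl i) (Inr X) + d (Inl i) (Inr Xh))" for i
  define S where "S i = {Z\<in>A. rep_pref \<sigma> i Z Xh}" for i
  define p where "p i Y = p_TH A t \<sigma> Xh i Y" for i Y
  have Hp: "0 < H t" using H_pos[OF assms(5)] .
  have cS: "(\<Sum>Z\<in>S i. 1 / (2 * H t * real (rnk \<sigma> i Z))) \<le> 1/2" if i: "i \<in> N" for i
    using harm_bound[of \<sigma> i t "S i"] top[OF i] assms(3,5) unfolding S_def rep_pref_def
    by (auto intro: finite_subset)
  have pnn: "0 \<le> p i Y" if i: "i \<in> N" for i Y
    using cS[OF i] Hp unfolding p_def p_TH_def S_def by (auto simp: rnk_def)
  have psum: "(\<Sum>Y\<in>A. p i Y) = 1" if i: "i \<in> N" for i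
  proof -
    have fS: "finite (S i)" using assms(3) unfolding S_def by simp
    have SA: "S i \<subseteq> A" unfolding S_def by auto
    have nX: "\<not> rep_pref \<sigma> i Xh Xh" unfolding rep_pref_def by auto
    have "(\<Sum>Y\<in>A. p i Y) = (\<Sum>Y\<in>S i. p i Y) + (\<Sum>Y\<in>A - S i. p i Y)"
      using sum.subset_diff[OF SA assms(3)] by (simp add: add.commute)
    also have "(\<Sum>Y\<in>S i. p i Y) = (\<Sum>Z\<in>S i. 1 / (2 * H t * real (rnk \<sigma> i Z)))"
      by (rule sum.cong) (auto simp: p_def p_TH_def S_def)
    also have "(\<Sum>Y\<in>A - S i. p i Y) = (\<Sum>Y\<in>A - S i. if Y = Xh then p i Xh else 0)"
      by (rule sum.cong) (auto simp: p_def p_TH_def S_def)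
    also have "\<dots> = p i Xh"
      using XhA nX assms(3) by (simp add: sum.delta S_def)
    also have "p i Xh = 1 - (\<Sum>Z\<in>S i. 1 / (2 * H t * real (rnk \<sigma> i Z)))"
      using nX unfolding p_def p_TH_def S_def by simp
    finally show ?thesis by simp
  qed
  have inner: "(\<Sum>Y\<in>A. p i Y * SC N d Y) \<le> B i" if i: "i \<in> N" for i
  proof -
    have "(\<Sum>Y\<in>A. p i Y * SC N d Y) \<le> (\<Sum>Y\<in>A. p i Y * B i)"
    proof (rule sum_mono)
      fix Y assume Y: "Y \<in> A"
      show "p i Y * SC N d Y \<le> p i Y * B i"
      proof (cases "p i Y = 0")
        case False
        have "SC N d Y \<le> B i"
        proof (cases "rep_pref \<sigma> i Y Xh")
          case True
          thus ?thesis using SCtri[OF i Y] dpref[OF i True] unfolding B_def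
            by (smt (verit) mult_left_mono of_nat_0_le_iff)
        next
          case nr: False
          hence "Y = Xh" using False unfolding p_def p_TH_def by (auto split: if_splits)
          thus ?thesis using SCtri[OF i Y] unfolding B_def by simp
        qed
        thus ?thesis using pnn[OF i, of Y] by (simp add: mult_left_mono)
      qed simp
    qed
    also have "\<dots> = B i" using psum[OF i] by (simp add: sum_distrib_right[symmetric])
    finally show ?thesis .
  qed
  have npos: "0 < real n" using assms(1,2) n_def by (simp add: card_gt_0_iff)
  have "exp_SC_TH N A t g \<sigma> d = (\<Sum>i\<in>N. (1 / real n) * (\<Sum>Y\<in>A. p i Y * SC N d Y))"
    unfolding exp_SC_TH_def p_def Xh_def n_def by simp
  also have "\<dots> \<le> (\<Sum>i\<in>N. (1 / real n) * B i)"
    by (rule sum_mono) (use inner npos in \<open>auto intro: divide_right_mono\<close>)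
  also have "\<dots> = (1 / real n) * (real n * SC N d X + real n * (SC N d X + SC N d Xh))"
  proof -
    have "(\<Sum>i\<in>N. B i) = real n * SC N d X + real n * (SC N d X + SC N d Xh)"
      unfolding B_def by (simp add: sum.distrib sum_distrib_left[symmetric] SC_def n_def)
    thus ?thesis by (metis sum_distrib_left)
  qed
  also have "\<dots> = 2 * SC N d X + SC N d Xh" using npos by (simp add: field_simps)
  also have "\<dots> \<le> (21 * real m / real t) * SC N d X"
  proof -
    have s0: "0 \<le> SC N d X" unfolding SC_def
      by (rule sum_nonneg) (use pm assms(10) in \<open>auto simp: pseudometric_on_def\<close>)
    have q: "1 \<le> real m / real t" using assms(5,6) by simp
    define Q where "Q = real m / real t"
    have e1: "(21 * real m / real t) * SC N d X = 21 * Q * SC N d X" unfolding Q_def by simp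
    have e2: "SC N d Xh \<le> (6 * Q + 1) * SC N d X" using SCXh unfolding Q_def by simp
    have "0 \<le> (15 * Q - 3) * SC N d X" using q s0 unfolding Q_def by simp
    hence "SC N d Xh + 2 * SC N d X \<le> 21 * Q * SC N d X" using e2 by (simp add: algebra_simps)
    thus ?thesis using e1 by simp
  qed
  finally show ?thesis .
qed

end
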